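(* Let $K$ be a Legendrian knot and $p\in K$. Then, for sufficiently small $\varepsilon>0$, the function $\Psi^{\mathrm{loc}}_p(t)=\mu_K(\{q\in K: d_{\mathcal{H}}(p,q)<t\})$, $t>0$, can be extended to a smooth odd function defined on the interval $(-\varepsilon,\varepsilon)$. Furthermore, $\varepsilon$ can be taken independently of $p$.
   Context: $\mathcal{H}=\mathbb{C}\times\mathbb{R}$ is the 3-dimensional Heisenberg group with coordinates $(x,y,u)$, group law $(x,y,u)\cdot(x',y',u')=(x+x',y+y',u+u'+\tfrac12(xy'-x'y))$, horizontal distribution spanned by $X=\partial_x-\tfrac12 y\,\partial_u$, $Y=\partial_y+\tfrac12 x\,\partial_u$ (orthonormal, norm $|\cdot|$). The Korányi distance is $d_{\mathcal{H}}(p,q)=\|p^{-1}q\|_{\mathcal{H}}$ with $\|(x,y,u)\|_{\mathcal{H}}=\sqrt[4]{(x^2+y^2)^2+16u^2}$. A Legendrian knot $K$ is a smooth closed path in $\mathcal{H}$ without self-intersections whose velocity is always horizontal; it is parametrized by arc length $s$ (with respect to $|\cdot|$), and $\mu_K$ is the arc-length measure on $K$. Thus $\Psi^{\mathrm{loc}}_p(t)$ is the length of $K\cap\mathbb{B}_{\mathcal{H}}(p;t)$, where $\mathbb{B}_{\mathcal{H}}(p;t)$ is the open Korányi ball. *)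

theory Defs
  imports "HOL-Analysis.Analysis"
begin

type_synonym heis = "real \<times> real \<times> real"

definition heis_mult :: "heis \<Rightarrow> heis \<Rightarrow> heis" where
  "heis_mult p q = (case p of (x, y, u) \<Rightarrow> case q of (x', y', u') \<Rightarrow>
      (x + x', y + y', u + u' + (x * y' - x' * y) / 2))"

definition heis_inv :: "heis \<Rightarrow> heis" where
  "heis_inv p = (case p of (x, y, u) \<Rightarrow> (-x, -y, -u))"

definition koranyi_norm :: "heis \<Rightarrow> real" where
  "koranyi_norm p = (case p of (x, y, u) \<Rightarrow> root 4 ((x^2 + y^2)^2 + 16 * u^2))"

definition koranyi_dist :: "heis \<Rightarrow> heis \<Rightarrow> real" where
  "koranyi_dist p q = koranyi_norm (heis_mult (heis_inv p) q)"

definition smooth_real :: "(real \<Rightarrow> real) \<Rightarrow> bool" where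
  "smooth_real f \<longleftrightarrow> (\<forall>n x. (deriv ^^ n) f differentiable (at x))"

definition smooth_real_on :: "real set \<Rightarrow> (real \<Rightarrow> real) \<Rightarrow> bool" where
  "smooth_real_on S f \<longleftrightarrow> (\<forall>n. \<forall>x\<in>S. (deriv ^^ n) f differentiable (at x))"

text \<open>A Legendrian knot of length L, parametrized by arc length s as an L-periodic
  smooth curve, injective on one period, with horizontal velocity of unit horizontal norm.\<close>
definition legendrian_knot :: "(real \<Rightarrow> heis) \<Rightarrow> real \<Rightarrow> bool" where
  "legendrian_knot \<gamma> L \<longleftrightarrow>
     L > 0 \<and>
     smooth_real (\<lambda>s. fst (\<gamma> s)) \<and>
     smooth_real (\<lambda>s. fst (snd (\<gamma> s))) \<and>
     smooth_real (\<lambda>s. snd (snd (\<gamma> s))) \<and>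
     (\<forall>s. \<gamma> (s + L) = \<gamma> s) \<and>
     inj_on \<gamma> {0..<L} \<and>
     (\<forall>s. deriv (\<lambda>s. snd (snd (\<gamma> s))) s =
            (fst (\<gamma> s) * deriv (\<lambda>s. fst (snd (\<gamma> s))) s
             - deriv (\<lambda>s. fst (\<gamma> s)) s * fst (snd (\<gamma> s))) / 2) \<and>
     (\<forall>s. (deriv (\<lambda>s. fst (\<gamma> s)) s)^2 + (deriv (\<lambda>s. fst (snd (\<gamma> s))) s)^2 = 1)"

text \<open>Psi^loc_p(t): arc length of K inside the open Koranyi ball B(p;t).\<close>
definition Psi_loc :: "(real \<Rightarrow> heis) \<Rightarrow> real \<Rightarrow> heis \<Rightarrow> real \<Rightarrow> real" where
  "Psi_loc \<gamma> L p t = measure lebesgue {s \<in> {0..<L}. koranyi_dist p (\<gamma> s) < t}"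

end

theory Submission
  imports Defs
begin


definition Cn :: "nat \<Rightarrow> real set \<Rightarrow> (real \<Rightarrow> real) \<Rightarrow> bool" where
  "Cn n S f \<longleftrightarrow> (\<forall>k\<le>n. \<forall>x\<in>S. (deriv ^^ k) f differentiable (at x))"

lemma Cn_0: "Cn 0 S f \<longleftrightarrow> (\<forall>x\<in>S. f differentiable (at x))"
  by (simp add: Cn_def)

lemma Cn_Suc: "Cn (Suc n) S f \<longleftrightarrow> (\<forall>x\<in>S. f differentiable (at x)) \<and> Cn n S (deriv f)"
proof -
  have "(\<forall>k\<le>Suc n. P k) \<longleftrightarrow> P 0 \<and> (\<forall>k\<le>n. P (Suc k))" for P
    by (metis Suc_le_mono le0 not0_implies_Suc)
  then show ?thesis unfolding Cn_def by (simp add: funpow_Suc_right del: funpow.simps)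
qed

lemma Cn_SucD1: "Cn (Suc n) S f \<Longrightarrow> x \<in> S \<Longrightarrow> f differentiable (at x)"
  using Cn_Suc by blast

lemma Cn_SucD2: "Cn (Suc n) S f \<Longrightarrow> Cn n S (deriv f)"
  using Cn_Suc by blast

lemma Cn_SucI: "(\<And>x. x \<in> S \<Longrightarrow> f differentiable (at x)) \<Longrightarrow> Cn n S (deriv f) \<Longrightarrow> Cn (Suc n) S f"
  using Cn_Suc by blast

lemma Cn_diff: "Cn n S f \<Longrightarrow> x \<in> S \<Longrightarrow> f differentiable (at x)"
  by (auto simp: Cn_def)

lemma Cn_mono: "Cn n S f \<Longrightarrow> m \<le> n \<Longrightarrow> Cn m S f"
  by (auto simp: Cn_def)

lemma Cn_subset: "Cn n S f \<Longrightarrow> T \<subseteq> S \<Longrightarrow> Cn n T f"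
  by (auto simp: Cn_def)

lemma smooth_on_iff_Cn: "smooth_real_on S f \<longleftrightarrow> (\<forall>n. Cn n S f)"
  by (auto simp: Cn_def smooth_real_on_def)

lemma smooth_real_Cn: "smooth_real f \<Longrightarrow> Cn n S f"
  by (auto simp: Cn_def smooth_real_def)

lemma smooth_real_deriv: "smooth_real f \<Longrightarrow> smooth_real (deriv f)"
  unfolding smooth_real_def by (metis funpow_Suc_right o_apply)

lemma smooth_real_differentiable: "smooth_real f \<Longrightarrow> f differentiable (at x)"
  unfolding smooth_real_def by (metis funpow_0)

lemma smooth_real_DERIV: "smooth_real f \<Longrightarrow> (f has_real_derivative deriv f x) (at x)"
  using smooth_real_differentiable DERIV_deriv_iff_real_differentiable by blast

lemma diff_transform_open:
  assumes "f differentiable (at x)" "open S" "x \<in> S" "\<And>y. y \<in> S \<Longrightarrow> f y = g y"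
  shows "g differentiable (at x)"
  using assms has_derivative_transform_within_open unfolding differentiable_def by blast

lemma Cn_cong:
  assumes "open S" "\<And>x. x \<in> S \<Longrightarrow> f x = g x" "Cn n S f"
  shows "Cn n S g"
  using assms
proof (induction n arbitrary: f g)
  case 0
  have "g differentiable (at x)" if "x \<in> S" for x
    using diff_transform_open[OF Cn_diff[OF 0(3) that] 0(1) that 0(2)] .
  then show ?case unfolding Cn_0 by blast
next
  case (Suc n)
  have ev: "\<forall>\<^sub>F y in nhds x. f y = g y" if "x \<in> S" for x
    using Suc.prems(1,2) that eventually_nhds by blast
  have dd: "deriv f x = deriv g x" if "x \<in> S" for x
    using deriv_cong_ev[OF ev[OF that] refl] .
  have gd: "g differentiable (at x)" if "x \<in> S" for x
    using diff_transform_open[OF Cn_diff[OF Suc.prems(3) that] Suc.prems(1) that Suc.prems(2)] .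
  have df: "Cn n S (deriv f)" using Suc.prems(3) by (rule Cn_SucD2)
  have "Cn n S (deriv g)" by (rule Suc.IH[of "deriv f" "deriv g", OF Suc.prems(1) dd df])
  then show ?case using gd by (intro Cn_SucI)
qed

lemma real_diff_DERIV: "f differentiable (at x) \<Longrightarrow> (f has_real_derivative deriv f x) (at x)"
  using DERIV_deriv_iff_real_differentiable by blast

lemma Cn_const: "Cn n S (\<lambda>x. c)"
proof (induction n arbitrary: c)
  case 0 then show ?case by (simp add: Cn_0)
next
  case (Suc n)
  have "deriv (\<lambda>x. c) = (\<lambda>x. 0)" by (rule ext) simp
  then show ?case using Suc[of 0] by (simp add: Cn_Suc)
qed

lemma Cn_id: "Cn n S (\<lambda>x. x)"
proof (cases n)
  case 0 then show ?thesis by (simp add: Cn_0)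
next
  case (Suc m)
  have "deriv (\<lambda>x. x) = (\<lambda>x. 1)" by (rule ext) simp
  then show ?thesis using Suc Cn_const[of m S 1] by (simp add: Cn_Suc)
qed

lemma Cn_add:
  assumes "open S" "Cn n S f" "Cn n S g"
  shows "Cn n S (\<lambda>x. f x + g x)"
  using assms
proof (induction n arbitrary: f g)
  case 0 then show ?case by (auto simp: Cn_0)
next
  case (Suc n)
  have d: "deriv (\<lambda>x. f x + g x) x = deriv f x + deriv g x" if "x \<in> S" for x
  proof -
    have "f differentiable (at x)" "g differentiable (at x)" using Cn_SucD1[OF Suc.prems(2) that] Cn_SucD1[OF Suc.prems(3) that] by auto
    from DERIV_add[OF real_diff_DERIV[OF this(1)] real_diff_DERIV[OF this(2)]]
    show ?thesis by (rule DERIV_imp_deriv)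
  qed
  have H: "Cn n S (\<lambda>x. deriv f x + deriv g x)"
    by (rule Suc.IH[OF Suc.prems(1) Cn_SucD2[OF Suc.prems(2)] Cn_SucD2[OF Suc.prems(3)]])
  have "Cn n S (deriv (\<lambda>x. f x + g x))"
    by (rule Cn_cong[OF \<open>open S\<close> _ H]) (erule d[symmetric])
  moreover have "\<forall>x\<in>S. (\<lambda>x. f x + g x) differentiable (at x)"
    using Cn_SucD1[OF Suc.prems(2)] Cn_SucD1[OF Suc.prems(3)] differentiable_add by blast
  ultimately show ?case by (intro Cn_SucI) auto
qed

lemma Cn_mult:
  assumes "open S" "Cn n S f" "Cn n S g"
  shows "Cn n S (\<lambda>x. f x * g x)"
  using assms
proof (induction n arbitrary: f g)
  case 0 then show ?case by (auto simp: Cn_0)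
next
  case (Suc n)
  have d: "deriv (\<lambda>x. f x * g x) x = deriv f x * g x + f x * deriv g x" if "x \<in> S" for x
  proof -
    have "f differentiable (at x)" "g differentiable (at x)" using Cn_SucD1[OF Suc.prems(2) that] Cn_SucD1[OF Suc.prems(3) that] by auto
    from DERIV_mult[OF real_diff_DERIV[OF this(1)] real_diff_DERIV[OF this(2)]]
    show ?thesis by (intro DERIV_imp_deriv) (simp add: algebra_simps)
  qed
  have fg: "Cn n S f" "Cn n S g" using Cn_mono[OF Suc.prems(2)] Cn_mono[OF Suc.prems(3)] by auto
  have df: "Cn n S (deriv f)" "Cn n S (deriv g)" using Cn_SucD2[OF Suc.prems(2)] Cn_SucD2[OF Suc.prems(3)] by auto
  have H: "Cn n S (\<lambda>x. deriv f x * g x + f x * deriv g x)"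
    by (intro Cn_add Suc.IH Suc.prems(1) fg df)
  have "Cn n S (deriv (\<lambda>x. f x * g x))"
    by (rule Cn_cong[OF \<open>open S\<close> _ H]) (erule d[symmetric])
  moreover have "\<forall>x\<in>S. (\<lambda>x. f x * g x) differentiable (at x)"
    using Cn_SucD1[OF Suc.prems(2)] Cn_SucD1[OF Suc.prems(3)] differentiable_mult by blast
  ultimately show ?case by (intro Cn_SucI) auto
qed

lemma Cn_cmult: "open S \<Longrightarrow> Cn n S f \<Longrightarrow> Cn n S (\<lambda>x. c * f x)"
  by (rule Cn_mult[OF _ Cn_const])

lemma Cn_minus: "open S \<Longrightarrow> Cn n S f \<Longrightarrow> Cn n S (\<lambda>x. - f x)"
  using Cn_cmult[of S n f "-1"] by simp

lemma Cn_diff':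
  assumes "open S" "Cn n S f" "Cn n S g" shows "Cn n S (\<lambda>x. f x - g x)"
proof -
  have "Cn n S (\<lambda>x. f x + - g x)" by (intro Cn_add Cn_minus assms)
  then show ?thesis by simp
qed

lemma Cn_compose:
  assumes "open S" "open T" "Cn n S f" "Cn n T g" "\<And>x. x \<in> S \<Longrightarrow> f x \<in> T"
  shows "Cn n S (\<lambda>x. g (f x))"
  using assms
proof (induction n arbitrary: f g)
  case 0 then show ?case
    unfolding Cn_0 using differentiable_chain_at[unfolded o_def] by blast
next
  case (Suc n)
  have d: "deriv (\<lambda>x. g (f x)) x = deriv g (f x) * deriv f x" if "x \<in> S" for x
  proof -
    have "f differentiable (at x)" "g differentiable (at (f x))"
      using Cn_SucD1[OF Suc.prems(3) that] Cn_SucD1[OF Suc.prems(4) Suc.prems(5)[OF that]] by auto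
    from DERIV_chain2[OF real_diff_DERIV[OF this(2)] real_diff_DERIV[OF this(1)]]
    show ?thesis by (rule DERIV_imp_deriv)
  qed
  have fg: "Cn n S f" "Cn n T g" using Cn_mono[OF Suc.prems(3)] Cn_mono[OF Suc.prems(4)] by auto
  have df: "Cn n S (deriv f)" "Cn n T (deriv g)" using Cn_SucD2[OF Suc.prems(3)] Cn_SucD2[OF Suc.prems(4)] by auto
  have "Cn n S (\<lambda>x. deriv g (f x))"
    by (rule Suc.IH[OF Suc.prems(1,2) fg(1) df(2) Suc.prems(5)])
  then have H: "Cn n S (\<lambda>x. deriv g (f x) * deriv f x)"
    by (intro Cn_mult Suc.prems(1) df)
  have "Cn n S (deriv (\<lambda>x. g (f x)))"
    by (rule Cn_cong[OF \<open>open S\<close> _ H]) (erule d[symmetric])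
  moreover have "\<forall>x\<in>S. (\<lambda>x. g (f x)) differentiable (at x)"
    using Cn_SucD1[OF Suc.prems(3)] Cn_SucD1[OF Suc.prems(4)] Suc.prems(5) differentiable_chain_at[unfolded o_def] by blast
  ultimately show ?case by (intro Cn_SucI) auto
qed

lemma inverse_differentiable: "(x::real) \<noteq> 0 \<Longrightarrow> inverse differentiable (at x)"
  using DERIV_inverse[of x] real_differentiable_def by blast

lemma Cn_inverse: "Cn n (-{0}) inverse"
proof (induction n)
  case 0 then show ?case by (simp add: Cn_0 inverse_differentiable)
next
  case (Suc n)
  have o: "open (-{0::real})" by auto
  have d: "deriv inverse x = - (inverse x * inverse x)" if "x \<in> -{0}" for x :: real
    using that by (intro DERIV_imp_deriv) (auto intro!: derivative_eq_intros simp: power2_eq_square)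
  have H: "Cn n (-{0}) (\<lambda>x. - (inverse x * inverse x))"
    using Suc by (intro Cn_minus Cn_mult o)
  have "Cn n (-{0}) (deriv inverse)"
    by (rule Cn_cong[OF o _ H]) (erule d[symmetric])
  moreover have "\<forall>x\<in>-{0::real}. inverse differentiable (at x)"
    by (simp add: inverse_differentiable)
  ultimately show ?case by (intro Cn_SucI) auto
qed


definition G :: "nat \<Rightarrow> (real \<Rightarrow> real) \<Rightarrow> real \<Rightarrow> real" where
  "G k f h = integral {0..1} (\<lambda>\<tau>. \<tau>^k * f (\<tau>*h))"

lemma smooth_real_cont: "smooth_real f \<Longrightarrow> continuous_on A f"
  by (meson continuous_at_imp_continuous_on differentiable_imp_continuous_within smooth_real_differentiable)

lemma G_deriv:
  assumes "smooth_real f"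
  shows "(G k f has_real_derivative G (Suc k) (deriv f) h) (at h)"
proof -
  have c: "continuous_on UNIV (deriv f)" using smooth_real_cont[OF smooth_real_deriv[OF assms]] .
  have c0: "continuous_on UNIV f" using smooth_real_cont[OF assms] .
  have "((\<lambda>x. integral (cbox 0 1) (\<lambda>\<tau>. \<tau>^k * f (\<tau>*x))) has_field_derivative
      integral (cbox 0 1) (\<lambda>\<tau>. \<tau>^(Suc k) * deriv f (\<tau>*h))) (at h within UNIV)"
  proof (rule leibniz_rule_field_derivative[where fx="\<lambda>x \<tau>. \<tau>^(Suc k) * deriv f (\<tau>*x)"])
    fix x t :: real
    show "((\<lambda>x. t ^ k * f (t * x)) has_real_derivative t ^ Suc k * deriv f (t * x)) (at x within UNIV)"
    proof -
      have "((\<lambda>x. f (t * x)) has_real_derivative deriv f (t*x) * t) (at x)"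
        by (rule DERIV_chain2[OF smooth_real_DERIV[OF assms]]) (auto intro!: derivative_eq_intros)
      from DERIV_cmult[OF this, of "t^k"] show ?thesis by (simp add: algebra_simps)
    qed
  next
    fix x :: real
    show "(\<lambda>\<tau>. \<tau> ^ k * f (\<tau> * x)) integrable_on cbox 0 1"
      by (intro integrable_continuous continuous_intros continuous_on_compose2[OF c0]) auto
  next
    show "continuous_on (UNIV \<times> cbox 0 1) (\<lambda>(x, \<tau>). \<tau> ^ Suc k * deriv f (\<tau> * x))"
    proof -
      have "continuous_on UNIV (\<lambda>p::real\<times>real. snd p ^ Suc k * deriv f (snd p * fst p))"
        by (intro continuous_intros continuous_on_compose2[OF c]) auto
      then show ?thesis unfolding case_prod_unfold using continuous_on_subset subset_UNIV by blast
    qed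
  qed auto
  then show ?thesis by (simp add: G_def[abs_def] cbox_interval)
qed

lemma G_deriv_eq: "smooth_real f \<Longrightarrow> deriv (G k f) = G (Suc k) (deriv f)"
  by (rule ext, rule DERIV_imp_deriv, rule G_deriv)

lemma G_smooth:
  assumes "smooth_real f" shows "smooth_real (G k f)"
proof -
  have "\<forall>f k. smooth_real f \<longrightarrow> (\<forall>x. (deriv ^^ n) (G k f) differentiable (at x))" for n
  proof (induction n)
    case 0
    then show ?case using G_deriv real_differentiable_def by auto
  next
    case (Suc n)
    show ?case
    proof (intro allI impI)
      fix f k x assume f: "smooth_real f"
      have "(deriv ^^ Suc n) (G k f) = (deriv ^^ n) (G (Suc k) (deriv f))"
        by (simp only: funpow_Suc_right o_apply G_deriv_eq[OF f])
      then show "(deriv ^^ Suc n) (G k f) differentiable (at x)"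
        using Suc.IH smooth_real_deriv[OF f] by metis
    qed
  qed
  then show ?thesis using assms unfolding smooth_real_def by blast
qed

lemma G_0: "G 0 f 0 = f 0"
  by (simp add: G_def)

lemma hadamard:
  assumes f: "smooth_real f" and E: "continuous_on UNIV E" and f0: "f 0 = 0"
    and d: "\<And>s. deriv f s = s^k * E s"
  shows "f h = h^(Suc k) * G k E h"
proof -
  have "((\<lambda>\<tau>. h^(Suc k) * (\<tau>^k * E (\<tau>*h))) has_integral (f (1*h) - f (0*h))) {0..1}"
  proof (rule fundamental_theorem_of_calculus)
    fix x assume "x \<in> {0..1::real}"
    have "((\<lambda>\<tau>. f (\<tau>*h)) has_real_derivative deriv f (x*h) * h) (at x)"
      by (rule DERIV_chain2[OF smooth_real_DERIV[OF f]]) (auto intro!: derivative_eq_intros)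
    moreover have "deriv f (x*h) * h = h^(Suc k) * (x^k * E (x*h))"
      by (simp add: d power_mult_distrib algebra_simps)
    ultimately show "((\<lambda>\<tau>. f (\<tau>*h)) has_vector_derivative h^(Suc k) * (x^k * E (x*h))) (at x within {0..1})"
      by (simp add: has_real_derivative_iff_has_vector_derivative[symmetric] has_field_derivative_at_within)
  qed auto
  then have "integral {0..1} (\<lambda>\<tau>. h^(Suc k) * (\<tau>^k * E (\<tau>*h))) = f (1*h) - f (0*h)"
    by (rule integral_unique)
  then have "h^(Suc k) * integral {0..1} (\<lambda>\<tau>. \<tau>^k * E (\<tau>*h)) = f h"
    using f0 by (simp only: integral_mult_right) simp
  then show ?thesis unfolding G_def by simp
qed


lemma root4_DERIV: "(z::real) > 0 \<Longrightarrow> (root 4 has_real_derivative inverse (4 * root 4 z ^ 3)) (at z)"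
  using DERIV_real_root[of 4 z] by simp

lemma Cn_root4: "Cn n {0<..} (root 4)"
proof (induction n)
  case 0
  then show ?case unfolding Cn_0 using root4_DERIV real_differentiable_def by auto
next
  case (Suc n)
  have o: "open {0::real<..}" by simp
  have d: "deriv (root 4) z = inverse (4 * (root 4 z * root 4 z * root 4 z))" if "z \<in> {0<..}" for z
    using root4_DERIV[of z] that by (simp add: DERIV_imp_deriv power3_eq_cube)
  have m: "Cn n {0<..} (\<lambda>z. 4 * (root 4 z * root 4 z * root 4 z))"
    by (intro Cn_cmult Cn_mult o Suc.IH)
  have H: "Cn n {0<..} (\<lambda>z. inverse (4 * (root 4 z * root 4 z * root 4 z)))"
    by (rule Cn_compose[OF o _ m Cn_inverse]) auto
  have "Cn n {0<..} (deriv (root 4))"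
    by (rule Cn_cong[OF o _ H]) (erule d[symmetric])
  moreover have "root 4 differentiable (at z)" if "z \<in> {0<..}" for z
    using root4_DERIV[of z] that real_differentiable_def by auto
  ultimately show ?case by (intro Cn_SucI) auto
qed

lemma Cn_inv_fun:
  assumes I: "open I" and J: "open J" and r: "\<And>n. Cn n I r" and r': "\<And>x. x \<in> I \<Longrightarrow> deriv r x \<noteq> 0"
    and ri: "\<And>t. t \<in> J \<Longrightarrow> ri t \<in> I" "\<And>t. t \<in> J \<Longrightarrow> r (ri t) = t"
    and c: "\<And>t. t \<in> J \<Longrightarrow> isCont ri t"
  shows "Cn n J ri"
proof -
  have D: "(ri has_real_derivative inverse (deriv r (ri t))) (at t)" if t: "t \<in> J" for t
  proof -
    obtain e where e: "e > 0" "ball t e \<subseteq> J" using J t open_contains_ball by blast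
    have dr: "(r has_real_derivative deriv r (ri t)) (at (ri t))"
      using real_diff_DERIV[OF Cn_diff[OF r[of 0] ri(1)[OF t]]] .
    show ?thesis
    proof (rule DERIV_inverse_function[where f=r and g=ri and x=t and a="t - e" and b="t + e", OF dr r'[OF ri(1)[OF t]]])
      show "t - e < t" "t < t + e" using e by auto
      fix y assume "t - e < y" "y < t + e"
      then have "y \<in> J" using e by (auto simp: dist_real_def)
      then show "r (ri y) = y" by (rule ri(2))
    qed (rule c[OF t])
  qed
  show ?thesis
  proof (induction n)
    case 0
    then show ?case unfolding Cn_0 using D real_differentiable_def by blast
  next
    case (Suc n)
    have d: "deriv ri t = inverse (deriv r (ri t))" if "t \<in> J" for t
      using D[OF that] by (rule DERIV_imp_deriv)
    have "Cn n I (deriv r)" using r[of "Suc n"] by (rule Cn_SucD2)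
    then have m: "Cn n J (\<lambda>t. deriv r (ri t))"
      by (rule Cn_compose[OF J I Suc.IH _ ri(1)])
    have H: "Cn n J (\<lambda>t. inverse (deriv r (ri t)))"
      by (rule Cn_compose[OF J _ m Cn_inverse]) (auto simp: r' ri(1))
    have "Cn n J (deriv ri)"
      by (rule Cn_cong[OF J _ H]) (erule d[symmetric])
    moreover have "ri differentiable (at t)" if "t \<in> J" for t
      using D[OF that] real_differentiable_def by blast
    ultimately show ?case by (intro Cn_SucI) auto
  qed
qed


lemma smooth_real_iff: "smooth_real f \<longleftrightarrow> (\<forall>n. Cn n UNIV f)"
  by (auto simp: Cn_def smooth_real_def)

lemma sm_add: "smooth_real f \<Longrightarrow> smooth_real g \<Longrightarrow> smooth_real (\<lambda>x. f x + g x)"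
  by (simp add: smooth_real_iff Cn_add)
lemma sm_diff: "smooth_real f \<Longrightarrow> smooth_real g \<Longrightarrow> smooth_real (\<lambda>x. f x - g x)"
  by (simp add: smooth_real_iff Cn_diff')
lemma sm_mult: "smooth_real f \<Longrightarrow> smooth_real g \<Longrightarrow> smooth_real (\<lambda>x. f x * g x)"
  by (simp add: smooth_real_iff Cn_mult)
lemma sm_const: "smooth_real (\<lambda>x. c)"
  by (simp add: smooth_real_iff Cn_const)
lemma sm_id: "smooth_real (\<lambda>x. x)"
  by (simp add: smooth_real_iff Cn_id)
lemma sm_compose: "smooth_real f \<Longrightarrow> smooth_real g \<Longrightarrow> smooth_real (\<lambda>x. g (f x))"
  unfolding smooth_real_iff by (metis Cn_compose UNIV_I open_UNIV)
lemma sm_divide: "smooth_real f \<Longrightarrow> smooth_real (\<lambda>x. f x / c)"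
proof -
  assume "smooth_real f"
  then have "smooth_real (\<lambda>x. f x * inverse c)" by (rule sm_mult[OF _ sm_const])
  then show ?thesis by (simp add: divide_inverse)
qed
lemma sm_shift: "smooth_real f \<Longrightarrow> smooth_real (\<lambda>h. f (s0 + h))"
  by (rule sm_compose[OF sm_add[OF sm_const sm_id]])
lemma sm_power: "smooth_real f \<Longrightarrow> smooth_real (\<lambda>x. f x ^ n)"
proof (induction n)
  case 0 then show ?case by (simp add: sm_const)
next
  case (Suc n) then show ?case using sm_mult[of f "\<lambda>x. f x ^ n"] by simp
qed

lemma shift_DERIV:
  assumes f: "smooth_real f" shows "((\<lambda>h. f (s0 + h)) has_real_derivative deriv f (s0 + h)) (at h)"
proof -
  have "((\<lambda>h. s0 + h) has_real_derivative 1) (at h)" by (auto intro!: derivative_eq_intros)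
  from DERIV_chain2[OF smooth_real_DERIV[OF f] this] show ?thesis by simp
qed

locale lcurve =
  fixes x y u :: "real \<Rightarrow> real"
  assumes sx: "smooth_real x" and sy: "smooth_real y" and su: "smooth_real u"
    and hor: "\<And>s. deriv u s = (x s * deriv y s - deriv x s * y s) / 2"
    and unit: "\<And>s. (deriv x s)^2 + (deriv y s)^2 = 1"
begin

definition "Xf s0 h = x (s0 + h) - x s0"
definition "Yf s0 h = y (s0 + h) - y s0"
definition "Uf s0 h = u (s0 + h) - u s0 + (x (s0 + h) * y s0 - x s0 * y (s0 + h)) / 2"
definition "Ff s0 h = ((Xf s0 h)^2 + (Yf s0 h)^2)^2 + 16 * (Uf s0 h)^2"

lemma sdx: "smooth_real (deriv x)" and sdy: "smooth_real (deriv y)"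
  using smooth_real_deriv sx sy by auto

lemma Xf_DERIV: "(Xf s0 has_real_derivative deriv x (s0 + h)) (at h)"
  unfolding Xf_def[abs_def] using DERIV_diff[OF shift_DERIV[OF sx] DERIV_const] by simp
lemma Yf_DERIV: "(Yf s0 has_real_derivative deriv y (s0 + h)) (at h)"
  unfolding Yf_def[abs_def] using DERIV_diff[OF shift_DERIV[OF sy] DERIV_const] by simp

lemma Uf_DERIV: "(Uf s0 has_real_derivative
    (Xf s0 h * deriv y (s0 + h) - deriv x (s0 + h) * Yf s0 h) / 2) (at h)"
proof -
  have "(Uf s0 has_real_derivative
      deriv u (s0 + h) - 0 + (deriv x (s0 + h) * y s0 - x s0 * deriv y (s0 + h)) / 2) (at h)"
  proof -
    have a: "((\<lambda>h. x (s0 + h) * y s0 - x s0 * y (s0 + h)) has_real_derivative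
      deriv x (s0 + h) * y s0 - x s0 * deriv y (s0 + h)) (at h)"
      by (rule DERIV_diff[OF DERIV_cmult_right[OF shift_DERIV[OF sx]] DERIV_cmult[OF shift_DERIV[OF sy]]])
    have b: "((\<lambda>h. u (s0 + h) - u s0) has_real_derivative deriv u (s0 + h) - 0) (at h)"
      by (rule DERIV_diff[OF shift_DERIV[OF su] DERIV_const])
    show ?thesis unfolding Uf_def[abs_def] by (rule DERIV_add[OF b DERIV_cdivide[OF a]])
  qed
  then show ?thesis by (simp add: hor Xf_def Yf_def algebra_simps add_divide_distrib diff_divide_distrib)
qed

lemma sXf: "smooth_real (Xf s0)" unfolding Xf_def[abs_def] by (rule sm_diff[OF sm_shift[OF sx] sm_const])
lemma sYf: "smooth_real (Yf s0)" unfolding Yf_def[abs_def] by (rule sm_diff[OF sm_shift[OF sy] sm_const])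
lemma sUf: "smooth_real (Uf s0)" unfolding Uf_def[abs_def]
  by (rule sm_add[OF sm_diff[OF sm_shift[OF su] sm_const] sm_divide[OF sm_diff[OF
      sm_mult[OF sm_shift[OF sx] sm_const] sm_mult[OF sm_const sm_shift[OF sy]]]]])

lemma factor: "\<exists>\<phi>. smooth_real \<phi> \<and> \<phi> 0 = 1 \<and> (\<forall>h. Ff s0 h = h^4 * \<phi> h)"
proof -
  define Ex where "Ex = (\<lambda>s. deriv x (s0 + s))"
  define Ey where "Ey = (\<lambda>s. deriv y (s0 + s))"
  have sEx: "smooth_real Ex" unfolding Ex_def by (rule sm_shift[OF sdx])
  have sEy: "smooth_real Ey" unfolding Ey_def by (rule sm_shift[OF sdy])
  define A where "A = G 0 Ex"
  define B where "B = G 0 Ey"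
  have XA: "Xf s0 h = h * A h" for h
  proof -
    have "Xf s0 h = h^(Suc 0) * G 0 Ex h"
    proof (rule hadamard[OF sXf smooth_real_cont[OF sEx]])
      show "Xf s0 0 = 0" by (simp add: Xf_def)
      fix s show "deriv (Xf s0) s = s ^ 0 * Ex s"
        using DERIV_imp_deriv[OF Xf_DERIV] by (simp add: Ex_def)
    qed
    then show ?thesis by (simp add: A_def)
  qed
  have YB: "Yf s0 h = h * B h" for h
  proof -
    have "Yf s0 h = h^(Suc 0) * G 0 Ey h"
    proof (rule hadamard[OF sYf smooth_real_cont[OF sEy]])
      show "Yf s0 0 = 0" by (simp add: Yf_def)
      fix s show "deriv (Yf s0) s = s ^ 0 * Ey s"
        using DERIV_imp_deriv[OF Yf_DERIV] by (simp add: Ey_def)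
    qed
    then show ?thesis by (simp add: B_def)
  qed
  have sA: "smooth_real A" unfolding A_def by (rule G_smooth[OF sEx])
  have sB: "smooth_real B" unfolding B_def by (rule G_smooth[OF sEy])
  have A0: "A 0 = deriv x s0" by (simp add: A_def G_0 Ex_def)
  have B0: "B 0 = deriv y s0" by (simp add: B_def G_0 Ey_def)
  define D where "D = (\<lambda>h. (A h * Ey h - Ex h * B h) / 2)"
  have sD: "smooth_real D" unfolding D_def by (rule sm_divide[OF sm_diff[OF sm_mult[OF sA sEy] sm_mult[OF sEx sB]]])
  have D0: "D 0 = 0" by (simp add: D_def A0 B0 Ex_def Ey_def)
  have dU: "deriv (Uf s0) s = s * D s" for s
  proof -
    have "deriv (Uf s0) s = (Xf s0 s * deriv y (s0 + s) - deriv x (s0 + s) * Yf s0 s) / 2"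
      by (rule DERIV_imp_deriv[OF Uf_DERIV])
    also have "\<dots> = (s * A s * Ey s - Ex s * (s * B s)) / 2"
      by (simp only: XA YB Ex_def Ey_def)
    also have "\<dots> = s * D s" by (simp add: D_def algebra_simps)
    finally show ?thesis .
  qed
  define E where "E = G 0 (deriv D)"
  have sE: "smooth_real E" unfolding E_def by (rule G_smooth[OF smooth_real_deriv[OF sD]])
  have DE: "D h = h * E h" for h
  proof -
    have "D h = h^(Suc 0) * G 0 (deriv D) h"
      by (rule hadamard[OF sD smooth_real_cont[OF smooth_real_deriv[OF sD]] D0]) simp
    then show ?thesis by (simp add: E_def)
  qed
  define C where "C = G 2 E"
  have sC: "smooth_real C" unfolding C_def by (rule G_smooth[OF sE])
  have UC: "Uf s0 h = h^3 * C h" for h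
  proof -
    have "Uf s0 h = h^(Suc 2) * G 2 E h"
    proof (rule hadamard[OF sUf smooth_real_cont[OF sE]])
      show "Uf s0 0 = 0" by (simp add: Uf_def)
      fix s show "deriv (Uf s0) s = s ^ 2 * E s"
        by (simp only: dU DE power2_eq_square mult.assoc)
    qed
    then show ?thesis by (simp add: C_def)
  qed
  define \<phi> where "\<phi> = (\<lambda>h. ((A h)^2 + (B h)^2)^2 + 16 * h^2 * (C h)^2)"
  have a: "smooth_real \<phi>" unfolding \<phi>_def
    by (rule sm_add[OF sm_power[OF sm_add[OF sm_power[OF sA] sm_power[OF sB]]]
        sm_mult[OF sm_mult[OF sm_const sm_power[OF sm_id]] sm_power[OF sC]]])
  have b: "\<phi> 0 = 1" using unit[of s0] by (simp add: \<phi>_def A0 B0)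
  have c: "Ff s0 h = h^4 * \<phi> h" for h
  proof -
    have "Ff s0 h = ((h * A h)^2 + (h * B h)^2)^2 + 16 * (h^3 * C h)^2"
      by (simp only: Ff_def XA YB UC)
    also have "\<dots> = h^4 * \<phi> h"
      unfolding \<phi>_def by algebra
    finally show ?thesis .
  qed
  show ?thesis
    by (rule exI[of _ \<phi>]) (intro conjI allI a b c)
qed

end


lemma lip_bound:
  fixes f f' :: "real \<Rightarrow> real"
  assumes d: "\<And>z. min a b \<le> z \<Longrightarrow> z \<le> max a b \<Longrightarrow> (f has_real_derivative f' z) (at z)"
    and bd: "\<And>z. min a b \<le> z \<Longrightarrow> z \<le> max a b \<Longrightarrow> \<bar>f' z\<bar> \<le> B"
  shows "\<bar>f b - f a\<bar> \<le> B * \<bar>b - a\<bar>"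
proof (cases a b rule: linorder_cases)
  case less
  obtain z where z: "a < z" "z < b" "f b - f a = (b - a) * f' z"
    using MVT2[OF less, of f f'] d less by (auto simp: min_def max_def)
  have "\<bar>f' z\<bar> \<le> B" using bd[of z] z less by (auto simp: min_def max_def)
  then show ?thesis using z less by (simp add: abs_mult mult_left_mono mult.commute)
next
  case equal
  then show ?thesis by simp
next
  case greater
  obtain z where z: "b < z" "z < a" "f a - f b = (a - b) * f' z"
    using MVT2[OF greater, of f f'] d greater by (auto simp: min_def max_def)
  have "\<bar>f' z\<bar> \<le> B" using bd[of z] z greater by (auto simp: min_def max_def)
  then show ?thesis using z greater
    by (simp add: abs_mult mult_left_mono mult.commute abs_minus_commute)
qed

lemma taylor1:
  assumes f: "smooth_real f" and M: "\<And>s. \<bar>deriv (deriv f) s\<bar> \<le> M"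
  shows "\<bar>f (s0 + h) - f s0 - h * deriv f (s0 + h)\<bar> \<le> M * h^2"
proof -
  define w where "w = (\<lambda>t. f t - t * deriv f (s0 + h))"
  have dw: "(w has_real_derivative deriv f t - deriv f (s0 + h)) (at t)" for t
    unfolding w_def using smooth_real_DERIV[OF f, of t]
    by (auto intro!: derivative_eq_intros)
  have M0: "0 \<le> M" using M[of 0] by linarith
  have l: "\<bar>deriv f (s0 + h) - deriv f t\<bar> \<le> M * \<bar>(s0 + h) - t\<bar>" for t
    by (rule lip_bound[OF smooth_real_DERIV[OF smooth_real_deriv[OF f]] M])
  have b: "\<bar>deriv f t - deriv f (s0 + h)\<bar> \<le> M * \<bar>h\<bar>"
    if "min s0 (s0 + h) \<le> t" "t \<le> max s0 (s0 + h)" for t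
  proof -
    have "\<bar>(s0 + h) - t\<bar> \<le> \<bar>h\<bar>" using that by (auto simp: min_def max_def split: if_splits)
    then have "M * \<bar>(s0 + h) - t\<bar> \<le> M * \<bar>h\<bar>" by (rule mult_left_mono[OF _ M0])
    then show ?thesis using l[of t] by (simp add: abs_minus_commute)
  qed
  have H: "\<bar>w (s0 + h) - w s0\<bar> \<le> (M * \<bar>h\<bar>) * \<bar>(s0 + h) - s0\<bar>"
    by (rule lip_bound[OF dw b])
  have e1: "w (s0 + h) - w s0 = f (s0 + h) - f s0 - h * deriv f (s0 + h)"
    by (simp add: w_def algebra_simps)
  have e2: "(M * \<bar>h\<bar>) * \<bar>(s0 + h) - s0\<bar> = M * h^2"
    by (simp add: power2_eq_square abs_mult_self_eq mult.assoc)
  show ?thesis using H unfolding e1 e2 .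
qed

lemma est_alg:
  fixes X Y a b h M :: real
  assumes ab: "a^2 + b^2 = 1" and eX: "\<bar>X - h*a\<bar> \<le> M*h^2" and eY: "\<bar>Y - h*b\<bar> \<le> M*h^2"
    and M: "1 \<le> M" and h: "\<bar>h\<bar> \<le> 1/(16*M)"
  shows "h*(X*a + Y*b) \<ge> h^2/2" "X^2 + Y^2 \<ge> h^2/4"
proof -
  have "a^2 \<le> 1" using ab zero_le_power2[of b] by linarith
  then have a1: "\<bar>a\<bar> \<le> 1" by (simp add: abs_square_le_1)
  have "b^2 \<le> 1" using ab zero_le_power2[of a] by linarith
  then have b1: "\<bar>b\<bar> \<le> 1" by (simp add: abs_square_le_1)
  have "M*\<bar>h\<bar> \<le> M*(1/(16*M))" using h M by (intro mult_left_mono) auto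
  then have Mh: "M*\<bar>h\<bar> \<le> 1/16" using M by simp
  have P: "X*a + Y*b - h = (X - h*a)*a + (Y - h*b)*b"
    using ab by algebra
  have "\<bar>(X - h*a)*a\<bar> = \<bar>X - h*a\<bar> * \<bar>a\<bar>" by (rule abs_mult)
  also have "\<dots> \<le> \<bar>X - h*a\<bar>" by (rule mult_left_le[OF a1 abs_ge_zero])
  finally have t1: "\<bar>(X - h*a)*a\<bar> \<le> M*h^2" using eX by linarith
  have "\<bar>(Y - h*b)*b\<bar> = \<bar>Y - h*b\<bar> * \<bar>b\<bar>" by (rule abs_mult)
  also have "\<dots> \<le> \<bar>Y - h*b\<bar>" by (rule mult_left_le[OF b1 abs_ge_zero])
  finally have t2: "\<bar>(Y - h*b)*b\<bar> \<le> M*h^2" using eY by linarith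
  have e: "\<bar>X*a + Y*b - h\<bar> \<le> 2*M*h^2" using P t1 t2 abs_triangle_ineq[of "(X - h*a)*a" "(Y - h*b)*b"] by linarith
  have hh: "\<bar>h\<bar>*\<bar>h\<bar> = h^2" by (simp add: power2_eq_square abs_mult_self_eq)
  have "2*M*h^2 = 2*((M*\<bar>h\<bar>)*\<bar>h\<bar>)" using hh by (simp add: mult.assoc)
  also have "(M*\<bar>h\<bar>)*\<bar>h\<bar> \<le> (1/16)*\<bar>h\<bar>" using Mh by (intro mult_right_mono) auto
  then have "2*((M*\<bar>h\<bar>)*\<bar>h\<bar>) \<le> 2*((1/16)*\<bar>h\<bar>)" by linarith
  finally have e2: "\<bar>X*a + Y*b - h\<bar> \<le> \<bar>h\<bar>/8" using e by linarith
  define P where "P = X*a + Y*b"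
  have e3: "\<bar>P - h\<bar> \<le> \<bar>h\<bar>/8" using e2 by (simp add: P_def)
  have hP: "h*P = h^2 + h*(P - h)" by (simp add: algebra_simps power2_eq_square)
  have "- (\<bar>h\<bar>*\<bar>P - h\<bar>) \<le> h*(P - h)" by (metis abs_ge_minus_self abs_mult minus_le_iff)
  moreover have "\<bar>h\<bar>*\<bar>P - h\<bar> \<le> \<bar>h\<bar>*(\<bar>h\<bar>/8)" using e3 by (intro mult_left_mono) auto
  ultimately have "h*(P - h) \<ge> - (h^2/8)" using hh by simp
  then show "h*(X*a + Y*b) \<ge> h^2/2" using hP zero_le_power2[of h] unfolding P_def by linarith
  have "\<bar>P\<bar> \<ge> \<bar>h\<bar>/2" using e3 by linarith
  then have "(\<bar>h\<bar>/2)^2 \<le> \<bar>P\<bar>^2" by (intro power_mono) auto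
  then have P2: "P^2 \<ge> h^2/4" by (simp add: power_divide)
  have "(X^2 + Y^2) - P^2 = (X*b - Y*a)^2" unfolding P_def using ab by algebra
  then show "X^2 + Y^2 \<ge> h^2/4" using P2 zero_le_power2[of "X*b - Y*a"] by linarith
qed


context lcurve begin

lemma abs_dx: "\<bar>deriv x s\<bar> \<le> 1"
proof -
  have "(deriv x s)^2 \<le> 1" using unit[of s] zero_le_power2[of "deriv y s"] by linarith
  then show ?thesis by (simp add: abs_square_le_1)
qed

lemma abs_dy: "\<bar>deriv y s\<bar> \<le> 1"
proof -
  have "(deriv y s)^2 \<le> 1" using unit[of s] zero_le_power2[of "deriv x s"] by linarith
  then show ?thesis by (simp add: abs_square_le_1)
qed

lemma Uf0: "Uf s0 0 = 0" by (simp add: Uf_def)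

lemma F_DERIV: "(Ff s0 has_real_derivative
   2 * ((Xf s0 h)^2 + (Yf s0 h)^2) * (2 * Xf s0 h * deriv x (s0 + h) + 2 * Yf s0 h * deriv y (s0 + h))
   + 16 * (2 * Uf s0 h * ((Xf s0 h * deriv y (s0 + h) - deriv x (s0 + h) * Yf s0 h) / 2))) (at h)"
proof -
  have dX2: "((\<lambda>h. (Xf s0 h)^2) has_real_derivative 2 * Xf s0 h * deriv x (s0 + h)) (at h)"
    by (rule DERIV_cong[OF DERIV_power[where n=2, OF Xf_DERIV]]) (simp add: algebra_simps)
  have dY2: "((\<lambda>h. (Yf s0 h)^2) has_real_derivative 2 * Yf s0 h * deriv y (s0 + h)) (at h)"
    by (rule DERIV_cong[OF DERIV_power[where n=2, OF Yf_DERIV]]) (simp add: algebra_simps)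
  have dU2: "((\<lambda>h. (Uf s0 h)^2) has_real_derivative
      2 * Uf s0 h * ((Xf s0 h * deriv y (s0 + h) - deriv x (s0 + h) * Yf s0 h) / 2)) (at h)"
    by (rule DERIV_cong[OF DERIV_power[where n=2, OF Uf_DERIV]]) (simp add: algebra_simps)
  have dS: "((\<lambda>h. (Xf s0 h)^2 + (Yf s0 h)^2) has_real_derivative
      2 * Xf s0 h * deriv x (s0 + h) + 2 * Yf s0 h * deriv y (s0 + h)) (at h)"
    by (rule DERIV_add[OF dX2 dY2])
  have dS2: "((\<lambda>h. ((Xf s0 h)^2 + (Yf s0 h)^2)^2) has_real_derivative
      2 * ((Xf s0 h)^2 + (Yf s0 h)^2) * (2 * Xf s0 h * deriv x (s0 + h) + 2 * Yf s0 h * deriv y (s0 + h))) (at h)"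
    by (rule DERIV_cong[OF DERIV_power[where n=2, OF dS]]) (simp add: algebra_simps)
  show ?thesis unfolding Ff_def[abs_def]
    by (rule DERIV_add[OF dS2 DERIV_cmult[OF dU2]])
qed

end

locale lcurveM = lcurve +
  fixes M :: real
  assumes M1: "1 \<le> M" and bdx: "\<And>s. \<bar>deriv (deriv x) s\<bar> \<le> M" and bdy: "\<And>s. \<bar>deriv (deriv y) s\<bar> \<le> M"
begin

lemma eX: "\<bar>Xf s0 h - h * deriv x (s0 + h)\<bar> \<le> M * h^2"
  using taylor1[OF sx bdx, of s0 h] by (simp add: Xf_def)
lemma eY: "\<bar>Yf s0 h - h * deriv y (s0 + h)\<bar> \<le> M * h^2"
  using taylor1[OF sy bdy, of s0 h] by (simp add: Yf_def)

lemma est1: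
  assumes "\<bar>h\<bar> \<le> 1/(16*M)"
  shows "h * (Xf s0 h * deriv x (s0 + h) + Yf s0 h * deriv y (s0 + h)) \<ge> h^2/2"
    "(Xf s0 h)^2 + (Yf s0 h)^2 \<ge> h^2/4"
  using est_alg[OF unit[of "s0 + h"] _ _ M1 assms, of "Xf s0 h" "Yf s0 h"] eX[of s0 h] eY[of s0 h]
  by (auto simp: mult.commute)

lemma dU_bound: "\<bar>(Xf s0 h * deriv y (s0 + h) - deriv x (s0 + h) * Yf s0 h) / 2\<bar> \<le> M * h^2"
proof -
  have eq: "Xf s0 h * deriv y (s0 + h) - deriv x (s0 + h) * Yf s0 h
     = (Xf s0 h - h * deriv x (s0 + h)) * deriv y (s0 + h) - deriv x (s0 + h) * (Yf s0 h - h * deriv y (s0 + h))"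
    by (simp add: algebra_simps)
  have "\<bar>(Xf s0 h - h * deriv x (s0 + h)) * deriv y (s0 + h)\<bar> \<le> M * h^2"
    using eX[of s0 h] abs_dy[of "s0 + h"]
    by (metis abs_ge_zero abs_mult mult_left_le order_trans)
  moreover have "\<bar>deriv x (s0 + h) * (Yf s0 h - h * deriv y (s0 + h))\<bar> \<le> M * h^2"
    using eY[of s0 h] abs_dx[of "s0 + h"]
    by (metis abs_ge_zero abs_mult mult_left_le order_trans mult.commute)
  ultimately have "\<bar>Xf s0 h * deriv y (s0 + h) - deriv x (s0 + h) * Yf s0 h\<bar> \<le> 2 * (M * h^2)"
    unfolding eq using abs_triangle_ineq4 by (smt (verit))
  then show ?thesis by simp
qed

lemma U_bound: "\<bar>Uf s0 h\<bar> \<le> M * \<bar>h\<bar>^3"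
proof -
  have b: "\<bar>(Xf s0 t * deriv y (s0 + t) - deriv x (s0 + t) * Yf s0 t) / 2\<bar> \<le> M * h^2"
    if "min 0 h \<le> t" "t \<le> max 0 h" for t
  proof -
    have "\<bar>t\<bar> \<le> \<bar>h\<bar>" using that by (auto simp: min_def max_def split: if_splits)
    then have "t^2 \<le> h^2" by (simp add: abs_le_square_iff)
    then have "M * t^2 \<le> M * h^2" using M1 by (intro mult_left_mono) auto
    then show ?thesis using dU_bound[of s0 t] by linarith
  qed
  have "\<bar>Uf s0 h - Uf s0 0\<bar> \<le> M * h^2 * \<bar>h - 0\<bar>"
    by (rule lip_bound[OF Uf_DERIV b])
  then show ?thesis by (simp add: Uf0 power2_eq_square power3_eq_cube abs_mult_self_eq mult.assoc)
qed

end


context lcurveM begin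

lemma F_lower:
  assumes "\<bar>h\<bar> \<le> 1/(16*M)"
  shows "Ff s0 h \<ge> h^4/16"
proof -
  have S: "(Xf s0 h)^2 + (Yf s0 h)^2 \<ge> h^2/4" by (rule est1(2)[OF assms])
  have "(h^2/4)^2 \<le> ((Xf s0 h)^2 + (Yf s0 h)^2)^2" by (rule power_mono[OF S]) simp
  moreover have "(h^2/4)^2 = h^4/16" by (simp add: power_divide power2_eq_square power4_eq_xxxx)
  ultimately show ?thesis unfolding Ff_def using zero_le_power2[of "Uf s0 h"] by linarith
qed

lemma hF_pos:
  assumes h0: "h \<noteq> 0" and h: "\<bar>h\<bar> \<le> 1/(16*M)"
  shows "h * deriv (Ff s0) h > 0"
proof -
  define S where "S = (Xf s0 h)^2 + (Yf s0 h)^2"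
  define P where "P = Xf s0 h * deriv x (s0 + h) + Yf s0 h * deriv y (s0 + h)"
  define U where "U = Uf s0 h"
  define U' where "U' = (Xf s0 h * deriv y (s0 + h) - deriv x (s0 + h) * Yf s0 h) / 2"
  have dF: "deriv (Ff s0) h = 4 * S * P + 32 * U * U'"
    using DERIV_imp_deriv[OF F_DERIV[of s0 h]] unfolding S_def P_def U_def U'_def
    by (simp add: algebra_simps)
  have S4: "S \<ge> h^2/4" unfolding S_def by (rule est1(2)[OF h])
  have P2: "h * P \<ge> h^2/2" unfolding P_def by (rule est1(1)[OF h])
  have "(h^2/4) * (h^2/2) \<le> S * (h * P)"
    by (rule mult_mono[OF S4 P2]) (simp_all add: S_def)
  moreover have "(h^2/4) * (h^2/2) = h^4/8" by (simp add: power2_eq_square power4_eq_xxxx)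
  ultimately have A: "S * (h * P) \<ge> h^4/8" by linarith
  have Ub: "\<bar>U\<bar> \<le> M * \<bar>h\<bar>^3" unfolding U_def by (rule U_bound)
  have U'b: "\<bar>U'\<bar> \<le> M * h^2" unfolding U'_def by (rule dU_bound)
  have M0: "0 \<le> M" using M1 by linarith
  have "M*\<bar>h\<bar> \<le> M*(1/(16*M))" using h M1 by (intro mult_left_mono) auto
  then have Mh: "M*\<bar>h\<bar> \<le> 1/16" using M1 by simp
  have "\<bar>h * U * U'\<bar> = \<bar>h\<bar> * \<bar>U\<bar> * \<bar>U'\<bar>" by (simp add: abs_mult)
  also have "\<dots> \<le> \<bar>h\<bar> * (M * \<bar>h\<bar>^3) * (M * h^2)"
    by (intro mult_mono Ub U'b mult_left_mono) (auto simp: M0)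
  also have "\<dots> = (M*\<bar>h\<bar>)^2 * h^4"
    by (simp add: power2_eq_square power3_eq_cube power4_eq_xxxx abs_mult_self_eq algebra_simps)
  also have "\<dots> \<le> (1/16)^2 * h^4"
    by (intro mult_right_mono power_mono Mh) (auto simp: M0)
  also have "(1/16::real)^2 * h^4 = h^4/256" by (simp add: power2_eq_square)
  finally have B: "\<bar>h * U * U'\<bar> \<le> h^4/256" .
  have h4: "h^4 > 0" using h0 by simp
  have "h * deriv (Ff s0) h = 4 * (S * (h * P)) + 32 * (h * U * U')"
    unfolding dF by (simp add: algebra_simps)
  moreover have "h * U * U' \<ge> - (h^4/256)" using B by linarith
  ultimately show ?thesis using A h4 by linarith
qed

end


context lcurveM begin

lemma near:
  assumes d0: "0 < \<delta>" and dM: "2*\<delta> \<le> 1/(16*M)"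
  shows "\<exists>ri. (\<forall>n. Cn n {-\<delta>/2<..<\<delta>/2} ri) \<and> (\<forall>t\<in>{-\<delta>/2<..<\<delta>/2}. -\<delta> < ri t \<and> ri t < \<delta>) \<and>
     (\<forall>t\<in>{0<..<\<delta>/2}. \<forall>h\<in>{-\<delta>..\<delta>}. (root 4 (Ff s0 h) < t \<longleftrightarrow> ri (-t) < h \<and> h < ri t))"
proof -
  obtain \<phi> where s\<phi>: "smooth_real \<phi>" and \<phi>0: "\<phi> 0 = 1" and F\<phi>: "\<And>h. Ff s0 h = h^4 * \<phi> h"
    using factor by blast
  define I where "I = {-2*\<delta><..<2*\<delta>}"
  define J where "J = {-\<delta>/2<..<\<delta>/2}"
  have oI: "open I" by (simp add: I_def)
  have oJ: "open J" by (simp add: J_def)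
  have hI: "\<bar>h\<bar> \<le> 1/(16*M)" if "h \<in> I" for h
    using that dM by (auto simp: I_def)
  have \<phi>pos: "\<phi> h > 0" if "h \<in> I" for h
  proof (cases "h = 0")
    case True then show ?thesis by (simp add: \<phi>0)
  next
    case False
    have h4: "h^4 > 0" using False by simp
    have "h^4 * \<phi> h \<ge> h^4/16" using F_lower[OF hI[OF that], of s0] by (simp add: F\<phi>)
    then have "h^4 * \<phi> h > 0" using h4 by linarith
    then show ?thesis using h4 by (simp add: zero_less_mult_iff)
  qed
  define g where "g = (\<lambda>h. root 4 (\<phi> h))"
  define r where "r = (\<lambda>h. h * g h)"
  have gC: "Cn n I g" for n
    unfolding g_def by (rule Cn_compose[OF oI _ smooth_real_Cn[OF s\<phi>] Cn_root4]) (auto simp: \<phi>pos)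
  have rC: "Cn n I r" for n
    unfolding r_def by (rule Cn_mult[OF oI Cn_id gC])
  have gpos: "g h > 0" if "h \<in> I" for h using \<phi>pos[OF that] by (simp add: g_def)
  have r4: "(r h)^4 = Ff s0 h" if "h \<in> I" for h
  proof -
    have "(g h)^4 = \<phi> h" unfolding g_def using \<phi>pos[OF that] by simp
    then show ?thesis by (simp add: r_def F\<phi> power_mult_distrib)
  qed
  have rabs: "root 4 (Ff s0 h) = \<bar>r h\<bar>" if "h \<in> I" for h
    by (rule real_root_pos_unique) (auto simp: r4[OF that, symmetric] power_even_abs)
  have rsign: "h * r h > 0" if "h \<in> I" "h \<noteq> 0" for h
  proof -
    have "h * h > 0" using that(2) by (metis not_real_square_gt_zero)
    then show ?thesis using gpos[OF that(1)] by (simp add: r_def mult.assoc[symmetric])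
  qed
  have rdiff: "r differentiable (at h)" if "h \<in> I" for h
    using Cn_diff[OF rC[of 0] that] .
  have r'pos: "deriv r h > 0" if hI': "h \<in> I" for h
  proof (cases "h = 0")
    case True
    have "(r has_real_derivative 1 * g 0 + deriv g 0 * 0) (at 0)"
      unfolding r_def
      by (rule DERIV_mult[OF DERIV_ident real_diff_DERIV[OF Cn_diff[OF gC[of 0]]]]) (use hI' True in simp)
    then have "deriv r 0 = g 0" by (simp add: DERIV_imp_deriv)
    then show ?thesis using True gpos hI' by simp
  next
    case False
    define D where "D = deriv r h"
    have dr: "(r has_real_derivative D) (at h)" unfolding D_def by (rule real_diff_DERIV[OF rdiff[OF hI']])
    have d1: "((\<lambda>h. r h ^ 4) has_real_derivative of_nat 4 * (D * r h ^ (4 - Suc 0))) (at h)"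
      by (rule DERIV_power[OF dr])
    have d2: "((\<lambda>h. r h ^ 4) has_real_derivative deriv (Ff s0) h) (at h)"
      by (rule has_field_derivative_transform_within_open[OF real_diff_DERIV oI hI'])
         (auto simp: r4 intro: DERIV_imp_deriv F_DERIV real_differentiable_def[THEN iffD2, OF exI, OF F_DERIV])
    have eq: "deriv (Ff s0) h = 4 * D * r h ^ 3" using DERIV_unique[OF d2 d1] by simp
    have pos: "h * deriv (Ff s0) h > 0" using hF_pos[OF False hI[OF hI']] .
    have hr: "h * r h > 0" using rsign[OF hI' False] .
    have rr: "(r h)^2 > 0" using hr by (auto simp: zero_less_mult_iff)
    have H: "h * deriv (Ff s0) h = (4 * D) * ((h * r h) * (r h)^2)"
      unfolding eq by (simp add: power2_eq_square power3_eq_cube algebra_simps)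
    have p1: "(4 * D) * ((h * r h) * (r h)^2) > 0" using pos unfolding H .
    have p2: "(h * r h) * (r h)^2 > 0" using hr rr by simp
    have "4 * D > 0" using p1 p2 by (metis zero_less_mult_pos2)
    then show ?thesis unfolding D_def by simp
  qed
  have mono: "r a < r b" if "a \<in> I" "b \<in> I" "a < b" for a b
  proof (rule DERIV_pos_imp_increasing[OF that(3)])
    fix z assume "a \<le> z" "z \<le> b"
    then have z: "z \<in> I" using that by (auto simp: I_def)
    show "\<exists>y. (r has_real_derivative y) (at z) \<and> 0 < y"
      using real_diff_DERIV[OF rdiff[OF z]] r'pos[OF z] by blast
  qed
  have mono_iff: "r a < r b \<longleftrightarrow> a < b" if "a \<in> I" "b \<in> I" for a b
    using mono[OF that] mono[OF that(2,1)] by (metis less_asym linorder_neqE_linordered_idom order_less_irrefl)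
  have dI: "\<delta> \<in> I" "-\<delta> \<in> I" using d0 by (auto simp: I_def)
  have root_d: "root 4 (\<delta>^4/16) = \<delta>/2"
    by (rule real_root_pos_unique) (use d0 in \<open>auto simp: power_divide\<close>)
  have rd: "r \<delta> \<ge> \<delta>/2"
  proof -
    have "\<delta>^4/16 \<le> Ff s0 \<delta>" using F_lower[OF hI[OF dI(1)]] .
    then have "\<delta>/2 \<le> root 4 (Ff s0 \<delta>)" using root_d real_root_le_mono[of 4] by (metis zero_less_numeral)
    moreover have "r \<delta> > 0" using rsign[OF dI(1)] d0 by (simp add: zero_less_mult_iff)
    ultimately show ?thesis using rabs[OF dI(1)] by simp
  qed
  have rmd: "r (-\<delta>) \<le> -\<delta>/2"
  proof -
    have "\<delta>^4/16 \<le> Ff s0 (-\<delta>)" using F_lower[OF hI[OF dI(2)]] by simp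
    then have "\<delta>/2 \<le> root 4 (Ff s0 (-\<delta>))" using root_d real_root_le_mono[of 4] by (metis zero_less_numeral)
    moreover have "r (-\<delta>) < 0" using rsign[OF dI(2)] d0 by (simp add: mult_less_0_iff)
    ultimately show ?thesis using rabs[OF dI(2)] by simp
  qed
  have cont: "continuous_on {-\<delta>..\<delta>} r"
  proof (rule continuous_at_imp_continuous_on, intro ballI)
    fix z assume "z \<in> {-\<delta>..\<delta>}"
    then have "z \<in> I" using d0 by (auto simp: I_def)
    then show "isCont r z" by (rule differentiable_imp_continuous_within[OF rdiff])
  qed
  have ex: "\<exists>h. -\<delta> < h \<and> h < \<delta> \<and> r h = t" if t: "t \<in> J" for t
  proof -
    have "r (-\<delta>) \<le> t" "t \<le> r \<delta>" using t rd rmd by (auto simp: J_def)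
    from IVT'[of r "-\<delta>" t \<delta>, OF this _ cont] d0 obtain h where h: "-\<delta> \<le> h" "h \<le> \<delta>" "r h = t" by auto
    have "h \<noteq> \<delta>" "h \<noteq> -\<delta>" using h(3) t rd rmd d0 by (auto simp: J_def)
    then have "-\<delta> < h" "h < \<delta>" using h by auto
    then show ?thesis using h(3) by blast
  qed
  have inI: "h \<in> I" if "-\<delta> < h" "h < \<delta>" for h using that by (auto simp: I_def)
  define ri where "ri = (\<lambda>t. THE h. -\<delta> < h \<and> h < \<delta> \<and> r h = t)"
  have uniq: "h1 = h2" if "-\<delta> < h1" "h1 < \<delta>" "-\<delta> < h2" "h2 < \<delta>" "r h1 = r h2" for h1 h2
    using mono_iff[OF inI[OF that(1,2)] inI[OF that(3,4)]] mono_iff[OF inI[OF that(3,4)] inI[OF that(1,2)]] that(5)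
    by (metis linorder_neqE_linordered_idom order_less_irrefl)
  have ri: "-\<delta> < ri t \<and> ri t < \<delta> \<and> r (ri t) = t" if "t \<in> J" for t
  proof -
    have "\<exists>!h. -\<delta> < h \<and> h < \<delta> \<and> r h = t" using ex[OF that] uniq by blast
    then show ?thesis unfolding ri_def by (rule theI')
  qed
  have ri_r: "ri (r z) = z" if "-\<delta> < z" "z < \<delta>" for z
    unfolding ri_def by (rule the_equality) (use that uniq in auto)
  have cri: "isCont ri t" if t: "t \<in> J" for t
  proof -
    define x0 where "x0 = ri t"
    have x0: "-\<delta> < x0" "x0 < \<delta>" "r x0 = t" using ri[OF t] by (auto simp: x0_def)
    define d where "d = (\<delta> - \<bar>x0\<bar>)/2"
    have d: "d > 0" using x0 by (auto simp: d_def)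
    have zr: "-\<delta> < z \<and> z < \<delta>" if "\<bar>z - x0\<bar> \<le> d" for z
    proof -
      have "\<bar>z\<bar> \<le> \<bar>x0\<bar> + \<bar>z - x0\<bar>" using abs_triangle_ineq[of x0 "z - x0"] by simp
      moreover have "\<bar>x0\<bar> < \<delta>" using x0 by auto
      moreover have H: "\<And>a b c::real. a \<le> b + c \<Longrightarrow> b < \<delta> \<Longrightarrow> c \<le> (\<delta> - b)/2 \<Longrightarrow> a < \<delta>"
        by (simp add: field_simps)
      ultimately have "\<bar>z\<bar> < \<delta>" using that unfolding d_def by blast
      then show ?thesis by (simp add: abs_less_iff)
    qed
    have "isCont ri (r x0)"
    proof (rule isCont_inverse_function[where f=r and g=ri and x=x0, OF d])
      fix z assume "\<bar>z - x0\<bar> \<le> d"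
      then have z: "-\<delta> < z" "z < \<delta>" using zr by auto
      show "ri (r z) = z" by (rule ri_r[OF z])
      show "isCont r z" by (rule differentiable_imp_continuous_within[OF rdiff[OF inI[OF z]]])
    qed
    then show ?thesis using x0 by simp
  qed
  have riC: "Cn n J ri" for n
  proof (rule Cn_inv_fun[OF oI oJ rC])
    fix x assume "x \<in> I" then show "deriv r x \<noteq> 0" using r'pos by force
  next
    fix t assume "t \<in> J" then show "ri t \<in> I" "r (ri t) = t" using ri inI by auto
  next
    fix t assume "t \<in> J" then show "isCont ri t" by (rule cri)
  qed
  have sub: "(root 4 (Ff s0 h) < t \<longleftrightarrow> ri (-t) < h \<and> h < ri t)"
    if t: "t \<in> {0<..<\<delta>/2}" and h: "h \<in> {-\<delta>..\<delta>}" for t h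
  proof -
    have tJ: "t \<in> J" "-t \<in> J" using t by (auto simp: J_def)
    have hI': "h \<in> I" using h d0 by (auto simp: I_def)
    have r1: "ri t \<in> I" "r (ri t) = t" using ri[OF tJ(1)] inI by auto
    have r2: "ri (-t) \<in> I" "r (ri (-t)) = -t" using ri[OF tJ(2)] inI by auto
    have "root 4 (Ff s0 h) < t \<longleftrightarrow> r (ri (-t)) < r h \<and> r h < r (ri t)"
      unfolding rabs[OF hI'] r1(2) r2(2) by auto
    also have "\<dots> \<longleftrightarrow> ri (-t) < h \<and> h < ri t"
      using mono_iff[OF r2(1) hI'] mono_iff[OF hI' r1(1)] by simp
    finally show ?thesis .
  qed
  show ?thesis
    using riC ri sub by (intro exI[of _ ri] conjI ballI allI) (auto simp: J_def)
qed

end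


lemma periodic_nat:
  assumes p: "\<And>s. f (s + L) = f (s::real)"
  shows "f (s + real n * L) = f s"
proof (induction n)
  case 0 then show ?case by simp
next
  case (Suc n)
  have "f (s + real (Suc n) * L) = f ((s + real n * L) + L)" by (simp add: algebra_simps)
  also have "\<dots> = f (s + real n * L)" by (rule p)
  finally show ?case using Suc by simp
qed

lemma periodic_int:
  assumes p: "\<And>s. f (s + L) = f (s::real)"
  shows "f (s + of_int k * L) = f s"
proof (cases "k \<ge> 0")
  case True
  then obtain n where "k = int n" by (metis nonneg_eq_int)
  then show ?thesis using periodic_nat[where f=f and L=L, OF p, of s n] by simp
next
  case False
  then obtain n where k: "k = - int n" by (metis neg_int_cases less_le not_le)
  have "f s = f ((s - real n * L) + real n * L)" by simp
  also have "\<dots> = f (s - real n * L)" by (rule periodic_nat[where f=f and L=L, OF p])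
  finally show ?thesis using k by simp
qed

lemma reduce_mod:
  fixes s L :: real assumes L: "L > 0"
  shows "0 \<le> s - of_int \<lfloor>s/L\<rfloor> * L" "s - of_int \<lfloor>s/L\<rfloor> * L < L"
proof -
  have "of_int \<lfloor>s/L\<rfloor> \<le> s/L" by (rule of_int_floor_le)
  then have "of_int \<lfloor>s/L\<rfloor> * L \<le> s/L * L" using L by (intro mult_right_mono) auto
  then show "0 \<le> s - of_int \<lfloor>s/L\<rfloor> * L" using L by simp
  have "s/L < of_int \<lfloor>s/L\<rfloor> + 1" by (rule real_of_int_floor_add_one_gt)
  then have "s/L * L < (of_int \<lfloor>s/L\<rfloor> + 1) * L" using L by (intro mult_strict_right_mono) auto
  then show "s - of_int \<lfloor>s/L\<rfloor> * L < L" using L by (simp add: algebra_simps)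
qed

lemma periodic_bounded:
  assumes p: "\<And>s. f (s + L) = f (s::real)" and L: "L > 0" and c: "continuous_on UNIV (f :: real \<Rightarrow> real)"
  shows "\<exists>B. \<forall>s. \<bar>f s\<bar> \<le> B"
proof -
  have "compact (f ` {0..L})" by (rule compact_continuous_image[OF continuous_on_subset[OF c]]) auto
  then obtain B where B: "\<And>y. y \<in> f ` {0..L} \<Longrightarrow> norm y \<le> B"
    using compact_imp_bounded bounded_iff by metis
  have "\<bar>f s\<bar> \<le> B" for s
  proof -
    define s' where "s' = s - of_int \<lfloor>s/L\<rfloor> * L"
    have "s' \<in> {0..L}" using reduce_mod[OF L, of s] by (auto simp: s'_def)
    moreover have "f s = f s'"
      using periodic_int[where f=f and L=L, OF p, of s' "\<lfloor>s/L\<rfloor>"] by (simp add: s'_def)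
    ultimately show ?thesis using B by auto
  qed
  then show ?thesis by blast
qed

lemma deriv_periodic:
  assumes p: "\<And>s. f (s + L) = f (s::real)" and d: "\<And>s. f differentiable (at s)"
  shows "deriv f (s + L) = deriv f s"
proof -
  have "((\<lambda>s. s + L) has_real_derivative 1) (at s)" by (auto intro!: derivative_eq_intros)
  from DERIV_chain2[OF real_diff_DERIV[OF d[of "s + L"]] this]
  have "((\<lambda>s. f (s + L)) has_real_derivative deriv f (s + L)) (at s)" by simp
  moreover have "(\<lambda>s. f (s + L)) = f" using p by (rule ext)
  ultimately have "(f has_real_derivative deriv f (s + L)) (at s)" by simp
  then show ?thesis by (simp add: DERIV_imp_deriv)
qed

lemma periodic_measure:
  fixes Q :: "real \<Rightarrow> bool"
  assumes p: "\<And>s. Q (s + L) = Q s" and L: "L > 0" and m: "{s. Q s} \<in> sets lebesgue"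
  shows "measure lebesgue {s \<in> {0..<L}. Q s} = measure lebesgue {s \<in> {c..<c+L}. Q s}"
proof -
  define k where "k = \<lfloor>c/L\<rfloor>"
  define c' where "c' = c - of_int k * L"
  have c': "0 \<le> c'" "c' < L" using reduce_mod[OF L, of c] by (auto simp: c'_def k_def)
  have lm: "{s \<in> {a..<b}. Q s} \<in> lmeasurable" for a b
  proof (rule bounded_set_imp_lmeasurable)
    show "bounded {s \<in> {a..<b}. Q s}" by (rule bounded_subset[of "{a..b}"]) auto
    have "{s \<in> {a..<b}. Q s} = {a..<b} \<inter> {s. Q s}" by auto
    moreover have "{a..<b} \<in> sets lebesgue"
      using atLeastLessThan_borel[of a b] by (simp add: sets_completionI_sets)
    ultimately show "{s \<in> {a..<b}. Q s} \<in> sets lebesgue" using m by (metis sets.Int)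
  qed
  define A where "A = {s \<in> {c'..<L}. Q s}"
  define B0 where "B0 = {s \<in> {0..<c'}. Q s}"
  have e1: "{s \<in> {0..<L}. Q s} = B0 \<union> A" using c' by (auto simp: A_def B0_def)
  have e2: "{s \<in> {c'..<c'+L}. Q s} = A \<union> ((+) L ` B0)"
  proof (rule set_eqI)
    fix s
    show "s \<in> {s \<in> {c'..<c'+L}. Q s} \<longleftrightarrow> s \<in> A \<union> ((+) L ` B0)"
    proof
      assume s: "s \<in> {s \<in> {c'..<c'+L}. Q s}"
      show "s \<in> A \<union> ((+) L ` B0)"
      proof (cases "s < L")
        case True then show ?thesis using s by (auto simp: A_def)
      next
        case False
        have "Q (s - L)" using s p[of "s - L"] by simp
        then have "s - L \<in> B0" using s False by (auto simp: B0_def)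
        then have "L + (s - L) \<in> (+) L ` B0" by blast
        then show ?thesis by simp
      qed
    next
      assume "s \<in> A \<union> ((+) L ` B0)"
      then show "s \<in> {s \<in> {c'..<c'+L}. Q s}"
        using c' p by (auto simp: A_def B0_def add.commute)
    qed
  qed
  have e3: "{s \<in> {c..<c+L}. Q s} = (+) (of_int k * L) ` {s \<in> {c'..<c'+L}. Q s}"
  proof (rule set_eqI)
    fix s
    have q: "Q (s - of_int k * L) = Q s" using periodic_int[of Q L "s - of_int k * L" k] p by simp
    show "s \<in> {s \<in> {c..<c+L}. Q s} \<longleftrightarrow> s \<in> (+) (of_int k * L) ` {s \<in> {c'..<c'+L}. Q s}"
    proof
      assume s: "s \<in> {s \<in> {c..<c+L}. Q s}"
      then have "s - of_int k * L \<in> {s \<in> {c'..<c'+L}. Q s}" using q by (auto simp: c'_def)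
      then have "of_int k * L + (s - of_int k * L) \<in> (+) (of_int k * L) ` {s \<in> {c'..<c'+L}. Q s}" by blast
      then show "s \<in> (+) (of_int k * L) ` {s \<in> {c'..<c'+L}. Q s}" by simp
    next
      assume "s \<in> (+) (of_int k * L) ` {s \<in> {c'..<c'+L}. Q s}"
      then obtain z where z: "z \<in> {s \<in> {c'..<c'+L}. Q s}" "s = of_int k * L + z" by blast
      have "Q s" using z periodic_int[of Q L z k] p by (simp add: add.commute)
      then show "s \<in> {s \<in> {c..<c+L}. Q s}" using z by (auto simp: c'_def)
    qed
  qed
  have dj1: "B0 \<inter> A = {}" by (auto simp: A_def B0_def)
  have dj2: "A \<inter> ((+) L ` B0) = {}" using c' by (auto simp: A_def B0_def)
  have mA: "A \<in> fmeasurable lebesgue" unfolding A_def by (rule lm)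
  have mB: "B0 \<in> fmeasurable lebesgue" unfolding B0_def by (rule lm)
  have mLB: "(+) L ` B0 \<in> fmeasurable lebesgue" by (rule measurable_translation[OF mB])
  have "measure lebesgue {s \<in> {0..<L}. Q s} = measure lebesgue B0 + measure lebesgue A"
    unfolding e1 using measure_Un3[OF mB mA] dj1 by simp
  moreover have "measure lebesgue {s \<in> {c'..<c'+L}. Q s} = measure lebesgue A + measure lebesgue ((+) L ` B0)"
    unfolding e2 using measure_Un3[OF mA mLB] dj2 by simp
  moreover have "measure lebesgue ((+) L ` B0) = measure lebesgue B0" by (rule measure_translation)
  moreover have "measure lebesgue {s \<in> {c..<c+L}. Q s} = measure lebesgue {s \<in> {c'..<c'+L}. Q s}"
    unfolding e3 by (rule measure_translation)
  ultimately show ?thesis by simp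
qed

lemma measure_Ioo_lebesgue: "(a::real) \<le> b \<Longrightarrow> measure lebesgue {a<..<b} = b - a"
  by (subst measure_completion) auto


lemma distinct_pts:
  fixes \<gamma> :: "real \<Rightarrow> 'a"
  assumes p: "\<And>s. \<gamma> (s + L) = \<gamma> s" and L: "L > 0" and inj: "inj_on \<gamma> {0..<L}"
    and d: "0 < s2 - s1" "s2 - s1 < L"
  shows "\<gamma> s1 \<noteq> \<gamma> s2"
proof
  assume eq: "\<gamma> s1 = \<gamma> s2"
  define k1 where "k1 = \<lfloor>s1/L\<rfloor>"
  define k2 where "k2 = \<lfloor>s2/L\<rfloor>"
  define t1 where "t1 = s1 - of_int k1 * L"
  define t2 where "t2 = s2 - of_int k2 * L"
  have t: "t1 \<in> {0..<L}" "t2 \<in> {0..<L}" using reduce_mod[OF L] by (auto simp: t1_def t2_def k1_def k2_def)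
  have "\<gamma> t1 = \<gamma> s1" using periodic_int[where f=\<gamma> and L=L, OF p, of t1 k1] by (simp add: t1_def)
  moreover have "\<gamma> t2 = \<gamma> s2" using periodic_int[where f=\<gamma> and L=L, OF p, of t2 k2] by (simp add: t2_def)
  ultimately have "\<gamma> t1 = \<gamma> t2" using eq by simp
  then have "t1 = t2" by (rule inj_onD[OF inj _ t(1) t(2)])
  then have "s2 - s1 = of_int (k2 - k1) * L" by (simp add: t1_def t2_def algebra_simps)
  then have "0 < of_int (k2 - k1) * L" "of_int (k2 - k1) * L < 1 * L" using d by auto
  then have "0 < k2 - k1" "k2 - k1 < 1" using L by (simp_all add: zero_less_mult_iff mult_less_cancel_right)
  then show False by simp
qed

theorem proposition2p1:
  assumes "legendrian_knot \<gamma> L"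
  shows "\<exists>\<epsilon>>0. \<forall>p\<in>\<gamma> ` {0..<L}. \<exists>g :: real \<Rightarrow> real.
           smooth_real_on {-\<epsilon><..<\<epsilon>} g \<and>
           (\<forall>t\<in>{-\<epsilon><..<\<epsilon>}. g (-t) = - g t) \<and>
           (\<forall>t\<in>{0<..<\<epsilon>}. g t = Psi_loc \<gamma> L p t)"
proof -
  define x where "x = (\<lambda>s. fst (\<gamma> s))"
  define y where "y = (\<lambda>s. fst (snd (\<gamma> s)))"
  define u where "u = (\<lambda>s. snd (snd (\<gamma> s)))"
  have \<gamma>eq: "\<gamma> s = (x s, y s, u s)" for s by (simp add: x_def y_def u_def)
  have L0: "L > 0" and sx: "smooth_real x" and sy: "smooth_real y" and su: "smooth_real u"
    and per: "\<And>s. \<gamma> (s + L) = \<gamma> s" and inj: "inj_on \<gamma> {0..<L}"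
    and hor: "\<And>s. deriv u s = (x s * deriv y s - deriv x s * y s) / 2"
    and unit: "\<And>s. (deriv x s)^2 + (deriv y s)^2 = 1"
    using assms unfolding legendrian_knot_def x_def y_def u_def by auto
  interpret lc: lcurve x y u
    by unfold_locales (use sx sy su hor unit in auto)
  have px: "x (s + L) = x s" for s using per[of s] by (simp add: x_def)
  have py: "y (s + L) = y s" for s using per[of s] by (simp add: y_def)
  have pdx: "deriv x (s + L) = deriv x s" for s
    by (rule deriv_periodic[OF px smooth_real_differentiable[OF sx]])
  have pdy: "deriv y (s + L) = deriv y s" for s
    by (rule deriv_periodic[OF py smooth_real_differentiable[OF sy]])
  have pddx: "deriv (deriv x) (s + L) = deriv (deriv x) s" for s
    by (rule deriv_periodic[OF pdx smooth_real_differentiable[OF smooth_real_deriv[OF sx]]])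
  have pddy: "deriv (deriv y) (s + L) = deriv (deriv y) s" for s
    by (rule deriv_periodic[OF pdy smooth_real_differentiable[OF smooth_real_deriv[OF sy]]])
  obtain Bx where Bx: "\<And>s. \<bar>deriv (deriv x) s\<bar> \<le> Bx"
    using periodic_bounded[OF pddx L0 smooth_real_cont[OF smooth_real_deriv[OF smooth_real_deriv[OF sx]]]] by blast
  obtain By where By: "\<And>s. \<bar>deriv (deriv y) s\<bar> \<le> By"
    using periodic_bounded[OF pddy L0 smooth_real_cont[OF smooth_real_deriv[OF smooth_real_deriv[OF sy]]]] by blast
  define M where "M = max 1 (max Bx By)"
  interpret lm: lcurveM x y u M
  proof unfold_locales
    show "1 \<le> M" by (simp add: M_def)
    fix s
    show "\<bar>deriv (deriv x) s\<bar> \<le> M" using Bx[of s] by (simp add: M_def)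
    show "\<bar>deriv (deriv y) s\<bar> \<le> M" using By[of s] by (simp add: M_def)
  qed
  have M1: "1 \<le> M" by (simp add: M_def)
  define \<delta> where "\<delta> = min (L/4) (1/(32*M))"
  have d0: "0 < \<delta>" using L0 M1 by (simp add: \<delta>_def)
  have dM: "2*\<delta> \<le> 1/(16*M)" using M1 by (simp add: \<delta>_def min_def field_simps)
  have dL: "\<delta> \<le> L/4" by (simp add: \<delta>_def)
  have kd: "koranyi_dist (\<gamma> s0) (\<gamma> s) = root 4 (lc.Ff s0 (s - s0))" for s0 s
    unfolding koranyi_dist_def heis_mult_def heis_inv_def koranyi_norm_def \<gamma>eq
      lc.Ff_def lc.Xf_def lc.Yf_def lc.Uf_def
    by (simp add: algebra_simps)
  define \<Phi> where "\<Phi> = (\<lambda>p::real\<times>real. root 4 (lc.Ff (fst p) (snd p)))"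
  have cx: "continuous_on UNIV x" "continuous_on UNIV y" "continuous_on UNIV u"
    using smooth_real_cont sx sy su by auto
  have c1: "continuous_on UNIV (\<lambda>p::real\<times>real. f (fst p + snd p))" if "continuous_on UNIV f" for f :: "real \<Rightarrow> real"
    by (rule continuous_on_compose2[OF that]) (auto intro!: continuous_intros)
  have c2: "continuous_on UNIV (\<lambda>p::real\<times>real. f (fst p))" if "continuous_on UNIV f" for f :: "real \<Rightarrow> real"
    by (rule continuous_on_compose2[OF that]) (auto intro!: continuous_intros)
  have c\<Phi>: "continuous_on UNIV \<Phi>"
    unfolding \<Phi>_def lc.Ff_def lc.Xf_def lc.Yf_def lc.Uf_def
    by (intro continuous_intros c1 c2 cx) auto
  define K where "K = {0..L} \<times> {\<delta>..L-\<delta>}"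
  have cK: "compact K" unfolding K_def by (intro compact_Times compact_Icc)
  have neK: "K \<noteq> {}" using d0 dL L0 unfolding K_def by auto
  obtain pm where pm: "pm \<in> K" "\<And>q. q \<in> K \<Longrightarrow> \<Phi> pm \<le> \<Phi> q"
    using continuous_attains_inf[OF cK neK continuous_on_subset[OF c\<Phi>]] by blast
  define m where "m = \<Phi> pm"
  have Fnn: "lc.Ff a b \<ge> 0" for a b unfolding lc.Ff_def by simp
  have \<Phi>pos: "\<Phi> q > 0" if "q \<in> K" for q
  proof -
    obtain a b where q: "q = (a, b)" by force
    have ab: "0 \<le> a" "a \<le> L" "\<delta> \<le> b" "b \<le> L - \<delta>" using that q by (auto simp: K_def)
    have ne: "\<gamma> a \<noteq> \<gamma> (a + b)"
      by (rule distinct_pts[OF per L0 inj]) (use ab d0 in auto)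
    have "\<Phi> q \<noteq> 0"
    proof
      assume "\<Phi> q = 0"
      then have F0: "lc.Ff a b = 0" by (simp add: \<Phi>_def q)
      have "(lc.Xf a b)^2 + (lc.Yf a b)^2 = 0" "lc.Uf a b = 0"
        using F0 unfolding lc.Ff_def by (simp_all add: add_nonneg_eq_0_iff)
      then have "lc.Xf a b = 0" "lc.Yf a b = 0" "lc.Uf a b = 0"
        by (simp_all add: add_nonneg_eq_0_iff)
      then have "x (a + b) = x a" "y (a + b) = y a" "u (a + b) = u a"
        unfolding lc.Xf_def lc.Yf_def lc.Uf_def by (simp_all add: algebra_simps)
      then have "\<gamma> a = \<gamma> (a + b)" by (simp add: \<gamma>eq)
      then show False using ne by simp
    qed
    moreover have "\<Phi> q \<ge> 0" using Fnn by (simp add: \<Phi>_def)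
    ultimately show ?thesis by simp
  qed
  have m0: "m > 0" unfolding m_def by (rule \<Phi>pos[OF pm(1)])
  have far: "root 4 (lc.Ff s0 h) \<ge> m" if "0 \<le> s0" "s0 \<le> L" "\<delta> \<le> h" "h \<le> L - \<delta>" for s0 h
    using pm(2)[of "(s0, h)"] that by (simp add: K_def m_def \<Phi>_def)
  define \<epsilon> where "\<epsilon> = min (\<delta>/2) m"
  have e0: "\<epsilon> > 0" using d0 m0 by (simp add: \<epsilon>_def)
  have main: "\<exists>g :: real \<Rightarrow> real. smooth_real_on {-\<epsilon><..<\<epsilon>} g \<and>
           (\<forall>t\<in>{-\<epsilon><..<\<epsilon>}. g (-t) = - g t) \<and>
           (\<forall>t\<in>{0<..<\<epsilon>}. g t = Psi_loc \<gamma> L (\<gamma> s0) t)" if s0: "s0 \<in> {0..<L}" for s0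
  proof -
    obtain ri where riC: "\<And>n. Cn n {-\<delta>/2<..<\<delta>/2} ri"
      and riI: "\<And>t. t \<in> {-\<delta>/2<..<\<delta>/2} \<Longrightarrow> -\<delta> < ri t \<and> ri t < \<delta>"
      and sub: "\<And>t h. t \<in> {0<..<\<delta>/2} \<Longrightarrow> h \<in> {-\<delta>..\<delta>} \<Longrightarrow>
                 (root 4 (lc.Ff s0 h) < t \<longleftrightarrow> ri (-t) < h \<and> h < ri t)"
      using lm.near[OF d0 dM, of s0] by blast
    define g where "g = (\<lambda>t. ri t - ri (-t))"
    define E where "E = {-\<epsilon><..<\<epsilon>}"
    have oE: "open E" by (simp add: E_def)
    have EJ: "E \<subseteq> {-\<delta>/2<..<\<delta>/2}" using d0 by (auto simp: E_def \<epsilon>_def)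
    have gC: "Cn n E g" for n
    proof -
      have a: "Cn n E ri" by (rule Cn_subset[OF riC EJ])
      have b: "Cn n E (\<lambda>t. ri (- t))"
        by (rule Cn_compose[OF oE _ Cn_minus[OF oE Cn_id] riC]) (use EJ in \<open>auto simp: E_def\<close>)
      show ?thesis unfolding g_def by (rule Cn_diff'[OF oE a b])
    qed
    have sm: "smooth_real_on {-\<epsilon><..<\<epsilon>} g" using gC by (simp add: smooth_on_iff_Cn E_def)
    have odd: "\<forall>t\<in>{-\<epsilon><..<\<epsilon>}. g (-t) = - g t" by (simp add: g_def)
    have val: "g t = Psi_loc \<gamma> L (\<gamma> s0) t" if t: "t \<in> {0<..<\<epsilon>}" for t
    proof -
      have tJ: "t \<in> {0<..<\<delta>/2}" using t by (auto simp: \<epsilon>_def)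
      have tJ2: "t \<in> {-\<delta>/2<..<\<delta>/2}" "-t \<in> {-\<delta>/2<..<\<delta>/2}" using tJ by auto
      have F00: "lc.Ff s0 0 = 0" by (simp add: lc.Ff_def lc.Xf_def lc.Yf_def lc.Uf_def)
      have ord: "ri (-t) < 0" "0 < ri t" using sub[OF tJ, of 0] d0 tJ by (auto simp: F00)
      define Q where "Q = (\<lambda>s. koranyi_dist (\<gamma> s0) (\<gamma> s) < t)"
      have pQ: "Q (s + L) = Q s" for s by (simp add: Q_def per)
      have cQ: "continuous_on UNIV (\<lambda>s. koranyi_dist (\<gamma> s0) (\<gamma> s))"
      proof -
        have "continuous_on UNIV (\<lambda>s. \<Phi> (s0, s - s0))"
          by (rule continuous_on_compose2[OF c\<Phi>]) (auto intro!: continuous_intros)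
        then show ?thesis by (simp add: kd \<Phi>_def)
      qed
      have mQ: "{s. Q s} \<in> sets lebesgue"
      proof -
        have "open {s. Q s}" unfolding Q_def
          by (rule open_Collect_less[OF cQ continuous_on_const])
        then show ?thesis by (simp add: sets_completionI_sets)
      qed
      have "Psi_loc \<gamma> L (\<gamma> s0) t = measure lebesgue {s \<in> {0..<L}. Q s}"
        by (simp add: Psi_loc_def Q_def)
      also have "\<dots> = measure lebesgue {s \<in> {s0 - \<delta>..<s0 - \<delta> + L}. Q s}"
        by (rule periodic_measure[OF pQ L0 mQ])
      also have "{s \<in> {s0 - \<delta>..<s0 - \<delta> + L}. Q s} = {s0 + ri (-t)<..<s0 + ri t}"
      proof (rule set_eqI, rule iffI)
        fix s assume s: "s \<in> {s \<in> {s0 - \<delta>..<s0 - \<delta> + L}. Q s}"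
        define h where "h = s - s0"
        have Qh: "root 4 (lc.Ff s0 h) < t" using s by (simp add: Q_def kd h_def)
        have hr: "-\<delta> \<le> h" "h < L - \<delta>" using s by (auto simp: h_def)
        show "s \<in> {s0 + ri (-t)<..<s0 + ri t}"
        proof (cases "h \<le> \<delta>")
          case True
          then have "ri (-t) < h \<and> h < ri t" using sub[OF tJ, of h] hr Qh by auto
          then show ?thesis by (simp add: h_def)
        next
          case False
          have "m \<le> root 4 (lc.Ff s0 h)" using far[of s0 h] s0 hr False by auto
          moreover have "t < m" using t by (simp add: \<epsilon>_def)
          ultimately show ?thesis using Qh by simp
        qed
      next
        fix s assume s: "s \<in> {s0 + ri (-t)<..<s0 + ri t}"
        define h where "h = s - s0"
        have hh: "ri (-t) < h" "h < ri t" using s by (auto simp: h_def)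
        have hd: "-\<delta> < h" "h < \<delta>" using hh riI[OF tJ2(1)] riI[OF tJ2(2)] by auto
        have "root 4 (lc.Ff s0 h) < t" using sub[OF tJ, of h] hh hd by auto
        then have "Q s" by (simp add: Q_def kd h_def)
        moreover have "s0 - \<delta> \<le> s" "s < s0 - \<delta> + L" using hd dL d0 by (auto simp: h_def)
        ultimately show "s \<in> {s \<in> {s0 - \<delta>..<s0 - \<delta> + L}. Q s}" by simp
      qed
      also have "measure lebesgue {s0 + ri (-t)<..<s0 + ri t} = ri t - ri (-t)"
        using ord by (subst measure_Ioo_lebesgue) auto
      finally show ?thesis by (simp add: g_def)
    qed
    show ?thesis using sm odd val by blast
  qed
  show ?thesis
    using e0 main by blast
qed


end
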